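(* Let $\alpha>-1$, $j\in\mathbb{N}\cup\{0\}$, $M>0$. Let $\{l_n^{(\alpha)}\}_{n\ge0}$ be the orthonormal Laguerre polynomials with respect to $x^\alpha e^{-x}$ on $(0,\infty)$, normalized so that $l_n^{(\alpha)}(0)>0$, let $\lambda_n=n$, $K_n^{(j,j)}(0,0)=\sum_{i=0}^n\big((l_i^{(\alpha)})^{(j)}(0)\big)^2$, and define $$\widetilde\lambda_n=\lambda_n+M\sum_{i=j+1}^n(\lambda_i-\lambda_{i-1})K_{i-1}^{(j,j)}(0,0),\qquad n\ge j+1.$$ Then $$\lim_{n\to+\infty}\frac{\widetilde\lambda_n}{n^{2j+\alpha+2}}=\frac{M}{(2j+\alpha+2)(2j+\alpha+1)\Gamma^2(\alpha+j+1)}.$$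
   Context: Background: $\lambda_n=n$ are the eigenvalues of the Laguerre equation $-xy''+(x-\alpha-1)y'=ny$, and $\widetilde\lambda_n$ are the eigenvalues of the differential operator $\mathbf{L}$ having as eigenfunctions the polynomials orthonormal with respect to $(f,g)=\int_0^\infty fg\,x^\alpha e^{-x}dx+Mf^{(j)}(0)g^{(j)}(0)$ (with the free parameters $\alpha_1=\dots=\alpha_j=0$). The sign normalization of $l_n^{(\alpha)}$ does not affect the quantities involved. *)

theory Defs
  imports "HOL-Analysis.Analysis" "HOL-Computational_Algebra.Polynomial"
begin

definition laguerre :: "real \<Rightarrow> nat \<Rightarrow> real poly" where
  "laguerre a n = (\<Sum>k\<le>n. monom (((real n + a) gchoose (n - k)) * (-1) ^ k / fact k) k)"

text \<open>Orthonormal Laguerre polynomial w.r.t. x^alpha e^(-x) on (0,inf), with positive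
  value at 0: l_n = sqrt(n! / Gamma(n+alpha+1)) * L_n.\<close>
definition lag_on :: "real \<Rightarrow> nat \<Rightarrow> real poly" where
  "lag_on a n = smult (sqrt (fact n / Gamma (real n + a + 1))) (laguerre a n)"

definition lag_eig :: "nat \<Rightarrow> real" where
  "lag_eig n = real n"

definition Kjj :: "real \<Rightarrow> nat \<Rightarrow> nat \<Rightarrow> real" where
  "Kjj a j n = (\<Sum>i\<le>n. (poly ((pderiv ^^ j) (lag_on a i)) 0) ^ 2)"

definition lam_tilde :: "real \<Rightarrow> nat \<Rightarrow> real \<Rightarrow> nat \<Rightarrow> real" where
  "lam_tilde a j M n = lag_eig n + M * (\<Sum>i\<in>{j+1..n}. (lag_eig i - lag_eig (i - 1)) * Kjj a j (i - 1))"

end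

theory Submission
  imports Defs "HOL-Real_Asymp.Real_Asymp"
begin

lemma stolz:
  fixes a b :: "nat \<Rightarrow> real"
  assumes mono: "\<And>n. b n < b (Suc n)"
    and nonneg: "\<And>n. b n \<ge> 0"
    and lim_b: "filterlim b at_top sequentially"
    and lim: "(\<lambda>n. (a (Suc n) - a n) / (b (Suc n) - b n)) \<longlonglongrightarrow> L"
  shows "(\<lambda>n. a n / b n) \<longlonglongrightarrow> L"
proof (rule LIMSEQ_I)
  fix r :: real assume r: "r > 0"
  from LIMSEQ_D[OF lim, of "r/2"] r obtain N where
    N: "\<And>n. n \<ge> N \<Longrightarrow> norm ((a (Suc n) - a n) / (b (Suc n) - b n) - L) < r/2" by auto
  have stp: "\<bar>a (Suc n) - a n - L*(b (Suc n) - b n)\<bar> \<le> r/2 * (b (Suc n) - b n)" if "n \<ge> N" for n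
  proof -
    define d where "d = b (Suc n) - b n"
    have d: "d > 0" using mono[of n] by (simp add: d_def)
    have "\<bar>(a (Suc n) - a n) / d - L\<bar> < r/2" using N[OF that] by (simp add: d_def)
    hence "\<bar>(a (Suc n) - a n) / d - L\<bar> * d \<le> r/2 * d" using d by simp
    also have "\<bar>(a (Suc n) - a n) / d - L\<bar> * d = \<bar>a (Suc n) - a n - L*d\<bar>"
      using d by (simp add: abs_mult_pos[symmetric] field_simps)
    finally show ?thesis by (simp add: d_def)
  qed
  have sum: "\<bar>a n - a N - L*(b n - b N)\<bar> \<le> r/2*(b n - b N)" if "n \<ge> N" for n
    using that
  proof (induction n rule: dec_induct)
    case base then show ?case by simp
  next
    case (step n)
    have "\<bar>a (Suc n) - a N - L*(b (Suc n) - b N)\<bar> \<le>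
          \<bar>a n - a N - L*(b n - b N)\<bar> + \<bar>a (Suc n) - a n - L*(b (Suc n) - b n)\<bar>"
      by (simp add: algebra_simps)
    also have "\<dots> \<le> r/2*(b n - b N) + r/2 * (b (Suc n) - b n)"
      using step.IH stp[OF step.hyps(1)] by linarith
    also have "\<dots> = r/2*(b (Suc n) - b N)" by (simp add: field_simps)
    finally show ?case .
  qed
  define C where "C = \<bar>a N - L * b N\<bar>"
  have "((\<lambda>n. C / b n) \<longlonglongrightarrow> 0)"
    by (rule tendsto_divide_0[OF tendsto_const filterlim_at_top_imp_at_infinity[OF lim_b]])
  hence ev1: "eventually (\<lambda>n. C / b n < r/2) sequentially"
    using r by (intro order_tendstoD(2)) auto
  have ev2: "eventually (\<lambda>n. b n > 0) sequentially"
    using lim_b by (simp add: filterlim_at_top_dense)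
  have ev3: "eventually (\<lambda>n. n \<ge> N) sequentially" by (rule eventually_ge_at_top)
  from eventually_conj[OF ev1 eventually_conj[OF ev2 ev3]]
  obtain N2 where N2: "\<And>n. n \<ge> N2 \<Longrightarrow> C / b n < r/2 \<and> b n > 0 \<and> n \<ge> N"
    by (auto simp: eventually_sequentially)
  show "\<exists>no. \<forall>n\<ge>no. norm (a n / b n - L) < r"
  proof (intro exI allI impI)
    fix n assume n: "n \<ge> N2"
    note h = N2[OF n]
    have bn: "b n > 0" using h by simp
    have "a n / b n - L = ((a n - a N - L*(b n - b N)) + (a N - L * b N)) / b n"
      using bn by (simp add: field_simps)
    hence "\<bar>a n / b n - L\<bar> \<le> (\<bar>a n - a N - L*(b n - b N)\<bar> + C) / b n"
      using bn by (simp add: C_def divide_right_mono abs_triangle_ineq)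
    also have "\<dots> \<le> (r/2*(b n - b N) + C) / b n"
      using sum[of n] h bn by (intro divide_right_mono) auto
    also have "\<dots> = r/2 * ((b n - b N)/ b n) + C / b n"
      using bn by (simp add: field_simps)
    also have "\<dots> < r/2 * 1 + r/2"
    proof -
      have "(b n - b N)/ b n \<le> 1" using bn nonneg[of N] by (simp add: field_simps)
      hence "r/2 * ((b n - b N)/ b n) \<le> r/2 * 1" using r by (intro mult_left_mono) auto
      thus ?thesis using h by linarith
    qed
    finally show "norm (a n / b n - L) < r" by simp
  qed
qed

lemma coeff_pderiv_iter:
  fixes p :: "real poly"
  shows "coeff ((pderiv ^^ j) p) i = pochhammer (of_nat (i+1)) j * coeff p (i+j)"
proof (induction j arbitrary: i)
  case 0 then show ?case by simp
next
  case (Suc j)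
  show ?case
    by (simp add: coeff_pderiv Suc.IH pochhammer_rec algebra_simps)
qed

lemma Gamma_ratio:
  fixes w :: real
  assumes w: "w > -1"
  shows "(\<lambda>m. Gamma (real m + w + 1) / (fact m * real m powr w)) \<longlonglongrightarrow> 1"
proof -
  have g0: "Gamma (w+1) \<noteq> 0" using w by (simp add: Gamma_real_pos less_imp_neq[symmetric])
  have lim1: "(\<lambda>m. Gamma (w+1) / Gamma_series (w+1) m * (real m / (real m + w + 1)))
        \<longlonglongrightarrow> Gamma (w+1) / Gamma (w+1) * 1"
    apply (intro tendsto_intros g0)
    by real_asymp
  have "eventually (\<lambda>m. Gamma (w+1) / Gamma_series (w+1) m * (real m / (real m + w + 1))
          = Gamma (real m + w + 1) / (fact m * real m powr w)) sequentially"
    using eventually_gt_at_top[of 0]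
  proof eventually_elim
    case (elim m)
    have pos1: "Gamma (real m + w + 1) > 0" using w by (intro Gamma_real_pos) auto
    have "rGamma (w+1) = pochhammer (w+1) (m+1) * rGamma (w + 1 + of_nat (m+1))"
      by (rule pochhammer_rGamma)
    hence poch: "pochhammer (w+1) (m+1) = Gamma (real m + w + 2) / Gamma (w+1)"
      using g0 Gamma_real_pos[of "real m + w + 2"] w
      by (simp add: rGamma_inverse_Gamma field_simps add_ac)
    have nn: "real m + w + 1 \<notin> \<int>\<^sub>\<le>\<^sub>0"
      using w nonpos_Ints_nonpos[of "real m + w + 1"] by force
    have "Gamma ((real m + w + 1) + 1) = (real m + w + 1) * Gamma (real m + w + 1)"
      by (rule Gamma_plus1[OF nn])
    then have g2: "Gamma (real m + w + 2) = (real m + w + 1) * Gamma (real m + w + 1)"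
      by (simp add: algebra_simps)
    have ex: "exp ((w+1) * ln (real m)) = real m * real m powr w"
    proof -
      have "exp ((w+1) * ln (real m)) = real m powr (w+1)" using elim by (simp add: powr_def)
      also have "\<dots> = real m powr w * real m powr 1" by (rule powr_add)
      also have "\<dots> = real m * real m powr w" using elim by simp
      finally show ?thesis .
    qed
    have mw: "real m + w + 1 > 0" using w by simp
    have gs: "Gamma_series (w+1) m = fact m * (real m * real m powr w) /
        ((real m + w + 1) * Gamma (real m + w + 1) / Gamma (w+1))"
      unfolding Gamma_series_def of_real_eq_id id_apply poch g2 ex by (rule refl)
    have aux: "\<And>F P G g x m::real. F>0 \<Longrightarrow> P>0 \<Longrightarrow> G>0 \<Longrightarrow> g\<noteq>0 \<Longrightarrow> x>0 \<Longrightarrow> m>0 \<Longrightarrow>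
        g / (F*(m*P)/((x*G)/g)) * (m/x) = G/(F*P)" by (simp add: field_simps)
    show ?case
      unfolding gs
      apply (rule aux)
      using elim mw pos1 g0 powr_gt_zero[of "real m" w] fact_gt_zero[of m]
      by auto
  qed
  from tendsto_cong[OF this] lim1 show ?thesis using g0 by simp
qed

lemma T_formula:
  assumes a: "a > -1" and jn: "j \<le> n"
  shows "(poly ((pderiv ^^ j) (lag_on a n)) 0)^2
    = fact n * Gamma (real n + a + 1) / ((fact (n-j))^2 * (Gamma (a + real j + 1))^2)"
proof -
  have c: "coeff (laguerre a n) j = ((real n + a) gchoose (n - j)) * (-1)^j / fact j"
    unfolding laguerre_def using jn by (simp add: coeff_sum coeff_monom)
  have p: "poly ((pderiv^^j) (lag_on a n)) 0 = fact j * coeff (lag_on a n) j"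
    using coeff_pderiv_iter[of j "lag_on a n" 0] by (simp add: poly_0_coeff_0 pochhammer_fact)
  have nn: "real n + a + 1 \<notin> \<int>\<^sub>\<le>\<^sub>0"
    using a nonpos_Ints_nonpos[of "real n + a + 1"] by force
  have "(real n + a) gchoose (n - j) = Gamma (real n + a + 1) / (fact (n-j) * Gamma (real n + a - real (n-j) + 1))"
    by (rule gbinomial_Gamma) (use nn in simp)
  also have "real n + a - real (n-j) + 1 = a + real j + 1" using jn by (simp add: of_nat_diff)
  finally have g: "(real n + a) gchoose (n - j) = Gamma (real n + a + 1) / (fact (n-j) * Gamma (a + real j + 1))" .
  have G1: "Gamma (real n + a + 1) > 0" using a by (intro Gamma_real_pos) auto
  have G2: "Gamma (a + real j + 1) > 0" using a by (intro Gamma_real_pos) auto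
  have fj: "(fact j :: real) > 0" by simp
  have fnj: "(fact (n-j) :: real) > 0" by simp
  have sq: "(sqrt (fact n / Gamma (real n + a + 1)))^2 = fact n / Gamma (real n + a + 1)"
    using G1 by simp
  have "(poly ((pderiv ^^ j) (lag_on a n)) 0)^2 = (sqrt (fact n / Gamma (real n + a + 1)))^2 *
      (Gamma (real n + a + 1) / (fact (n-j) * Gamma (a + real j + 1)))^2"
  proof -
    have m1: "((-1::real)^j)^2 = 1" by (simp add: power2_eq_square power_mult_distrib[symmetric])
    show ?thesis
      unfolding p unfolding lag_on_def coeff_smult c g using fj m1
      by (simp add: power_mult_distrib power_divide)
  qed
  also have "\<dots> = fact n * Gamma (real n + a + 1) / ((fact (n-j))^2 * (Gamma (a + real j + 1))^2)"
    unfolding sq using G1 G2 fnj by (simp add: field_simps power2_eq_square)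
  finally show ?thesis .
qed

theorem mainTheorem6:
  fixes a M :: real and j :: nat
  assumes "a > -1" and "M > 0"
  shows "(\<lambda>n. lam_tilde a j M n / real n powr (2 * real j + a + 2))
           \<longlonglongrightarrow> M / ((2 * real j + a + 2) * (2 * real j + a + 1) * (Gamma (a + real j + 1))\<^sup>2)"
proof -
  note a = assms(1)
  define p where "p = 2 * real j + a"
  have p1: "p > -1" using a by (simp add: p_def)
  define T where "T n = (poly ((pderiv ^^ j) (lag_on a n)) 0)^2" for n
  define G2 where "G2 = Gamma (a + real j + 1)"
  have G2: "G2 > 0" unfolding G2_def using a by (intro Gamma_real_pos) auto
  define C0 where "C0 = 1 / G2^2"
  have A': "(\<lambda>m. T (m+j) / real (m+j) powr p) \<longlonglongrightarrow> C0"
  proof -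
    have l: "(\<lambda>m. C0 * (Gamma (real m + real j + 1) / (fact m * real m powr real j))
        * (Gamma (real m + (real j + a) + 1) / (fact m * real m powr (real j + a)))
        * (real m powr p / (real m + real j) powr p)) \<longlonglongrightarrow> C0 * 1 * 1 * 1"
      apply (intro tendsto_intros Gamma_ratio)
      using a apply simp
      using a apply simp
      by real_asymp
    have "eventually (\<lambda>m. C0 * (Gamma (real m + real j + 1) / (fact m * real m powr real j))
        * (Gamma (real m + (real j + a) + 1) / (fact m * real m powr (real j + a)))
        * (real m powr p / (real m + real j) powr p) = T (m+j) / real (m+j) powr p) sequentially"
      using eventually_gt_at_top[of 0]
    proof eventually_elim
      case (elim m)
      have t: "T (m+j) = Gamma (real m + real j + 1) * Gamma (real m + (real j + a) + 1) / ((fact m)^2 * G2^2)"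
        unfolding T_def G2_def
        using T_formula[OF a, of j "m+j"] Gamma_fact[of "m+j", where 'a=real]
        by (simp add: add_ac)
      have pw: "real m powr p = real m powr real j * real m powr (real j + a)"
        unfolding p_def by (simp add: powr_add[symmetric] add_ac)
      have P1: "real m powr real j > 0" "real m powr (real j + a) > 0" using elim by auto
      have Q: "(real m + real j) powr p > 0" using elim by auto
      have F: "(fact m :: real) > 0" by simp
      show ?case unfolding t pw C0_def using P1 Q F G2
        by (simp add: field_simps power2_eq_square)
    qed
    from tendsto_cong[OF this] l show ?thesis by simp
  qed
  have A: "(\<lambda>n. T n / real n powr p) \<longlonglongrightarrow> C0"
    using LIMSEQ_offset[OF A'] .
  define K where "K n = Kjj a j n" for n
  have KT: "K (Suc n) - K n = T (Suc n)" for n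
    by (simp add: K_def Kjj_def T_def)
  have B: "(\<lambda>n. K n / real n powr (p+1)) \<longlonglongrightarrow> C0 * inverse (p+1)"
  proof (rule stolz)
    show "real n powr (p+1) < real (Suc n) powr (p+1)" for n
      using p1 by (intro powr_less_mono2) auto
    show "real n powr (p+1) \<ge> 0" for n by simp
    show "filterlim (\<lambda>n. real n powr (p+1)) at_top sequentially" using p1 by real_asymp
    have l: "(\<lambda>n. (T (Suc n) / real (Suc n) powr p) *
        ((real n + 1) powr p / ((real n + 1) powr (p+1) - real n powr (p+1)))) \<longlonglongrightarrow> C0 * inverse (p+1)"
      apply (intro tendsto_intros)
      using LIMSEQ_Suc[OF A] apply simp
      using p1 by real_asymp
    have "(T (Suc n) / real (Suc n) powr p) *
        ((real n + 1) powr p / ((real n + 1) powr (p+1) - real n powr (p+1)))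
        = (K (Suc n) - K n) / (real (Suc n) powr (p+1) - real n powr (p+1))" for n
    proof -
      have "(real n + 1) powr p > 0" by simp
      thus ?thesis unfolding KT by (simp add: field_simps)
    qed
    with l show "(\<lambda>n. (K (Suc n) - K n) / (real (Suc n) powr (p+1) - real n powr (p+1)))
        \<longlonglongrightarrow> C0 * inverse (p+1)" by simp
  qed
  define S where "S n = (\<Sum>i\<in>{j+1..n}. (lag_eig i - lag_eig (i - 1)) * Kjj a j (i - 1))" for n
  have SK: "S (Suc n) - S n = K n" if "n \<ge> j" for n
  proof -
    have "{j+1..Suc n} = insert (Suc n) {j+1..n}" using that by auto
    thus ?thesis by (simp add: S_def K_def lag_eig_def)
  qed
  have C: "(\<lambda>n. S n / real n powr (p+2)) \<longlonglongrightarrow> C0 * inverse (p+1) * inverse (p+2)"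
  proof (rule stolz)
    show "real n powr (p+2) < real (Suc n) powr (p+2)" for n
      using p1 by (intro powr_less_mono2) auto
    show "real n powr (p+2) \<ge> 0" for n by simp
    show "filterlim (\<lambda>n. real n powr (p+2)) at_top sequentially" using p1 by real_asymp
    have l: "(\<lambda>n. (K n / real n powr (p+1)) *
        (real n powr (p+1) / ((real n + 1) powr (p+2) - real n powr (p+2)))) \<longlonglongrightarrow> C0 * inverse (p+1) * inverse (p+2)"
      apply (intro tendsto_intros B)
      using p1 by real_asymp
    have "eventually (\<lambda>n. (K n / real n powr (p+1)) *
        (real n powr (p+1) / ((real n + 1) powr (p+2) - real n powr (p+2)))
        = (S (Suc n) - S n) / (real (Suc n) powr (p+2) - real n powr (p+2))) sequentially"
      using eventually_ge_at_top[of "Suc j"]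
    proof eventually_elim
      case (elim n)
      have "real n powr (p+1) > 0" using elim by simp
      thus ?case using SK[of n] elim by (simp add: field_simps)
    qed
    from tendsto_cong[OF this] l show "(\<lambda>n. (S (Suc n) - S n) / (real (Suc n) powr (p+2) - real n powr (p+2)))
        \<longlonglongrightarrow> C0 * inverse (p+1) * inverse (p+2)" by simp
  qed
  have D: "(\<lambda>n. real n / real n powr (p+2) + M * (S n / real n powr (p+2)))
      \<longlonglongrightarrow> 0 + M * (C0 * inverse (p+1) * inverse (p+2))"
    apply (intro tendsto_intros C)
    using p1 by real_asymp
  have eq: "lam_tilde a j M n / real n powr (2 * real j + a + 2)
      = real n / real n powr (p+2) + M * (S n / real n powr (p+2))" for n
    unfolding lam_tilde_def S_def p_def lag_eig_def
    by (simp add: add_divide_distrib add_ac)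
  have val: "0 + M * (C0 * inverse (p+1) * inverse (p+2))
      = M / ((2 * real j + a + 2) * (2 * real j + a + 1) * (Gamma (a + real j + 1))\<^sup>2)"
    using p1 G2 unfolding C0_def G2_def p_def by (simp add: field_simps)
  show ?thesis unfolding eq val[symmetric] using D .
qed

end
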